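(* Let $\varphi:\mathbb{N}\to[1,\infty)$ be a function. Suppose the random walk on $X$ induced by $\mu$ admits a Lyapunov function $V$ with contraction factor $\alpha<1$ (i.e. $\pi(\mu)V\le\alpha V+\beta$ for some $\beta\ge0$), and set $K_n=V^{-1}([0,\varphi(n)])$. (i) If $\lambda(\varphi)<\log(\alpha^{-1})$, then the random walk is $(K_n)_n$-uniformly recurrent; moreover $n_0$ in that definition can be chosen independently of $\epsilon$. (ii) If $\varphi$ has sub-exponential growth, then the random walk is $(K_n)_n$-uniformly recurrent on average.
   Context: Standing assumptions: $G$ is a locally compact $\sigma$-compact metrizable group acting ergodically on a locally compact $\sigma$-compact metrizable space $X$ with a $G$-invariant probability measure $m_X$; $\mu$ is a Borel probability measure on $G$; $\pi(\mu)F(x)=\int_G F(gx)\,d\mu(g)$ for nonnegative measurable $F$; $\mu^{*n}*\delta_x$ is the push-forward of $\mu^{\otimes n}\otimes\delta_x$ under $(g_n,\dots,g_1,x)\mapsto g_n\cdots g_1x$. A Lyapunov function is a proper continuous $V:X\to[0,\infty)$ with constants $\alpha<1$, $\beta\ge0$ such that $\pi(\mu)V\le\alpha V+\beta$ pointwise. For subsets $K_n\subset X$, the random walk is $(K_n)_n$-uniformly recurrent if for every $\epsilon>0$ there are $n_0\in\mathbb{N}$ and a compact $M\subset X$ with $\mu^{*n}*\delta_x(M)\ge1-\epsilon$ for all $n\ge n_0$ and $x\in K_n$; it is $(K_n)_n$-uniformly recurrent on average if the same holds with $\frac1n\sum_{k=0}^{n-1}\mu^{*k}*\delta_x$ in place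 of $\mu^{*n}*\delta_x$. The Lyapunov exponent of $\varphi$ is $\lambda(\varphi)=\limsup_{n\to\infty}\frac1n\log\varphi(n)$; $\varphi$ has sub-exponential growth if $\lambda(\varphi)=0$. *)

theory Defs
  imports "HOL-Analysis.Analysis" "HOL-Probability.Probability"
begin

definition sigma_compact_type :: "'a::topological_space itself \<Rightarrow> bool" where
  "sigma_compact_type _ \<longleftrightarrow> (\<exists>K::nat \<Rightarrow> 'a set. (\<forall>n. compact (K n)) \<and> (\<Union>n. K n) = UNIV)"

definition lcsc_group ::
  "('g::metric_space \<Rightarrow> 'g \<Rightarrow> 'g) \<Rightarrow> 'g \<Rightarrow> ('g \<Rightarrow> 'g) \<Rightarrow> bool" where
  "lcsc_group mul e ginv \<longleftrightarrow>
     (\<forall>a b c. mul (mul a b) c = mul a (mul b c)) \<and>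
     (\<forall>a. mul e a = a \<and> mul a e = a) \<and>
     (\<forall>a. mul (ginv a) a = e \<and> mul a (ginv a) = e) \<and>
     continuous_on UNIV (\<lambda>(a, b). mul a b) \<and> continuous_on UNIV ginv \<and>
     locally_compact_space (euclidean :: 'g topology) \<and> sigma_compact_type TYPE('g)"

definition lcsc_space :: "'x::metric_space itself \<Rightarrow> bool" where
  "lcsc_space _ \<longleftrightarrow> locally_compact_space (euclidean :: 'x topology) \<and> sigma_compact_type TYPE('x)"

definition continuous_action ::
  "('g::metric_space \<Rightarrow> 'g \<Rightarrow> 'g) \<Rightarrow> 'g \<Rightarrow> ('g \<Rightarrow> 'x::metric_space \<Rightarrow> 'x) \<Rightarrow> bool" where
  "continuous_action mul e act \<longleftrightarrow>
     (\<forall>x. act e x = x) \<and> (\<forall>g h x. act (mul g h) x = act g (act h x)) \<and>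
     continuous_on UNIV (\<lambda>(g, x). act g x)"

definition ergodic_invariant_prob ::
  "('g \<Rightarrow> 'x::metric_space \<Rightarrow> 'x) \<Rightarrow> 'x measure \<Rightarrow> bool" where
  "ergodic_invariant_prob act mX \<longleftrightarrow>
     prob_space mX \<and> sets mX = sets borel \<and>
     (\<forall>g. distr mX borel (act g) = mX) \<and>
     (\<forall>A \<in> sets borel. (\<forall>g. act g -` A = A) \<longrightarrow> measure mX A = 0 \<or> measure mX A = 1)"

text \<open>Product g_n ... g_1 of the first n coordinates (omega 0 = g_1, ..., omega (n-1) = g_n).\<close>
primrec gprod :: "('g \<Rightarrow> 'g \<Rightarrow> 'g) \<Rightarrow> 'g \<Rightarrow> (nat \<Rightarrow> 'g) \<Rightarrow> nat \<Rightarrow> 'g" where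
  "gprod mul e \<omega> 0 = e"
| "gprod mul e \<omega> (Suc k) = mul (\<omega> k) (gprod mul e \<omega> k)"

text \<open>mu^{*n} * delta_x: push-forward of mu^{\<otimes>n} \<otimes> delta_x under
(g_n,...,g_1,x) \<mapsto> g_n ... g_1 x.\<close>
definition walk_distr ::
  "('g \<Rightarrow> 'g \<Rightarrow> 'g) \<Rightarrow> 'g \<Rightarrow> ('g \<Rightarrow> 'x::topological_space \<Rightarrow> 'x) \<Rightarrow> 'g measure \<Rightarrow> nat \<Rightarrow> 'x \<Rightarrow> 'x measure" where
  "walk_distr mul e act \<mu> n x =
     distr (PiM {..<n} (\<lambda>_. \<mu>)) borel (\<lambda>\<omega>. act (gprod mul e \<omega> n) x)"

definition proper_fun :: "('x::topological_space \<Rightarrow> real) \<Rightarrow> bool" where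
  "proper_fun V \<longleftrightarrow> (\<forall>K. compact K \<longrightarrow> compact (V -` K))"

definition lyapunov ::
  "('g \<Rightarrow> 'x::topological_space \<Rightarrow> 'x) \<Rightarrow> 'g measure \<Rightarrow> ('x \<Rightarrow> real) \<Rightarrow> real \<Rightarrow> real \<Rightarrow> bool" where
  "lyapunov act \<mu> V \<alpha> \<beta> \<longleftrightarrow>
     proper_fun V \<and> continuous_on UNIV V \<and> (\<forall>x. 0 \<le> V x) \<and> \<alpha> < 1 \<and> 0 \<le> \<beta> \<and>
     (\<forall>x. enn2ereal (\<integral>\<^sup>+ g. ennreal (V (act g x)) \<partial>\<mu>) \<le> ereal (\<alpha> * V x + \<beta>))"

definition unif_recurrent ::
  "('g \<Rightarrow> 'g \<Rightarrow> 'g) \<Rightarrow> 'g \<Rightarrow> ('g \<Rightarrow> 'x::topological_space \<Rightarrow> 'x) \<Rightarrow> 'g measure \<Rightarrow> (nat \<Rightarrow> 'x set) \<Rightarrow> bool" where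
  "unif_recurrent mul e act \<mu> K \<longleftrightarrow>
     (\<forall>\<epsilon>>0. \<exists>n0 M. compact M \<and>
        (\<forall>n\<ge>n0. \<forall>x\<in>K n. measure (walk_distr mul e act \<mu> n x) M \<ge> 1 - \<epsilon>))"

definition unif_recurrent_avg ::
  "('g \<Rightarrow> 'g \<Rightarrow> 'g) \<Rightarrow> 'g \<Rightarrow> ('g \<Rightarrow> 'x::topological_space \<Rightarrow> 'x) \<Rightarrow> 'g measure \<Rightarrow> (nat \<Rightarrow> 'x set) \<Rightarrow> bool" where
  "unif_recurrent_avg mul e act \<mu> K \<longleftrightarrow>
     (\<forall>\<epsilon>>0. \<exists>n0 M. compact M \<and>
        (\<forall>n\<ge>n0. \<forall>x\<in>K n.
           (1 / real n) * (\<Sum>k<n. measure (walk_distr mul e act \<mu> k x) M) \<ge> 1 - \<epsilon>))"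

definition lyap_exp :: "(nat \<Rightarrow> real) \<Rightarrow> ereal" where
  "lyap_exp \<phi> = limsup (\<lambda>n. ereal (ln (\<phi> n) / real n))"

end

theory Submission
  imports Defs
begin

lemma sc_dense:
  assumes "sigma_compact_type TYPE('a::metric_space)"
  shows "\<exists>D::'a set. countable D \<and> (\<forall>x. \<forall>r>0. \<exists>p\<in>D. dist p x < r)"
proof -
  obtain K :: "nat \<Rightarrow> 'a set" where K: "\<And>n. compact (K n)" "(\<Union>n. K n) = UNIV"
    using assms unfolding sigma_compact_type_def by blast
  have "\<exists>F. F \<subseteq> K n \<and> finite F \<and> K n \<subseteq> (\<Union>p\<in>F. ball p (1 / Suc m))" for n m
  proof -
    have "K n \<subseteq> (\<Union>p\<in>K n. ball p (1 / Suc m))" by auto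
    then show ?thesis by (metis (no_types, lifting) compactE_image[OF K(1)[of n], of "K n" "\<lambda>p. ball p (1 / Suc m)"] open_ball)
  qed
  then obtain F where F: "\<And>n m. F n m \<subseteq> K n \<and> finite (F n m) \<and> K n \<subseteq> (\<Union>p\<in>F n m. ball p (1 / Suc m))"
    by metis
  define D where "D = (\<Union>n. \<Union>m. F n m)"
  have "countable D" unfolding D_def
  proof (intro countable_UN)
    fix n m show "countable (F n m)" using F[of n m] by (simp add: countable_finite)
  qed auto
  moreover have "\<exists>p\<in>D. dist p x < r" if "r > 0" for x r
  proof -
    obtain n where n: "x \<in> K n" using K(2) by blast
    obtain m where m: "1 / real (Suc m) < r" using \<open>r>0\<close>
      by (metis nat_approx_posE)
    obtain p where "p \<in> F n m" "x \<in> ball p (1 / Suc m)" using F n by blast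
    then have "p \<in> D" "dist p x < r" using m unfolding D_def by (auto simp: mem_ball)
    then show ?thesis by blast
  qed
  ultimately show ?thesis by blast
qed

lemma dist_pair_le: "dist (a, b) (c, d) \<le> dist a c + dist b d"
  unfolding dist_Pair_Pair by (rule sqrt_sum_squares_le_sum) auto

lemma open_in_pair_sets:
  fixes U :: "('a::metric_space \<times> 'b::metric_space) set" and D1 :: "'a set" and D2 :: "'b set"
  assumes D1: "countable D1" "\<And>x r. r > 0 \<Longrightarrow> \<exists>p\<in>D1. dist p x < r"
    and D2: "countable D2" "\<And>x r. r > 0 \<Longrightarrow> \<exists>p\<in>D2. dist p x < r"
    and U: "open U"
  shows "U \<in> sets (borel \<Otimes>\<^sub>M borel)"
proof -
  define R :: "'a \<times> 'b \<times> nat \<Rightarrow> ('a \<times> 'b) set" where "R = (\<lambda>(p, q, m::nat). ball p (1 / Suc m) \<times> ball q (1 / Suc m))"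
  define I where "I = {(p, q, m). p \<in> D1 \<and> q \<in> D2 \<and> R (p, q, m) \<subseteq> U}"
  have cI: "countable I"
  proof -
    have "I \<subseteq> D1 \<times> D2 \<times> UNIV" unfolding I_def by auto
    moreover have "countable (D1 \<times> D2 \<times> (UNIV :: nat set))" using D1 D2 by auto
    ultimately show ?thesis by (rule countable_subset)
  qed
  have "U = (\<Union>i\<in>I. R i)"
  proof
    show "(\<Union>i\<in>I. R i) \<subseteq> U" unfolding I_def by auto
    show "U \<subseteq> (\<Union>i\<in>I. R i)"
    proof
      fix z assume "z \<in> U"
      obtain x y where z: "z = (x, y)" by fastforce
      obtain r where r: "r > 0" "ball z r \<subseteq> U" using U \<open>z \<in> U\<close> open_contains_ball by blast
      obtain m where m: "1 / real (Suc m) < r / 4" using r by (metis nat_approx_posE zero_less_divide_iff zero_less_numeral)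
      define d where "d = 1 / real (Suc m)"
      have d: "d > 0" "4 * d < r" using m unfolding d_def by auto
      obtain p where p: "p \<in> D1" "dist p x < d" using D1(2) d by blast
      obtain q where q: "q \<in> D2" "dist q y < d" using D2(2) d by blast
      have "R (p, q, m) \<subseteq> U"
      proof
        fix w assume "w \<in> R (p, q, m)"
        then obtain u v where w: "w = (u, v)" "dist p u < d" "dist q v < d"
          unfolding R_def d_def by (auto simp: mem_ball)
        have "dist x u < 2 * d" using p w dist_triangle[of x u p] by (simp add: dist_commute)
        moreover have "dist y v < 2 * d" using q w dist_triangle[of y v q] by (simp add: dist_commute)
        ultimately have "dist z w < r" using dist_pair_le[of x y u v] z w(1) d by simp
        then show "w \<in> U" using r by (auto simp: mem_ball)
      qed
      moreover have "z \<in> R (p, q, m)" using p q z unfolding R_def d_def by (auto simp: mem_ball)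
      ultimately show "z \<in> (\<Union>i\<in>I. R i)" using p q unfolding I_def by blast
    qed
  qed
  moreover have "(\<Union>i\<in>I. R i) \<in> sets (borel \<Otimes>\<^sub>M borel)"
    using cI by (intro sets.countable_UN'') (auto simp: R_def)
  ultimately show ?thesis by simp
qed

lemma act_meas:
  fixes act :: "'g::metric_space \<Rightarrow> 'x::metric_space \<Rightarrow> 'x"
  assumes "sigma_compact_type TYPE('g)" "sigma_compact_type TYPE('x)"
    and c: "continuous_on UNIV (\<lambda>(g, x). act g x)"
  shows "(\<lambda>(g, x). act g x) \<in> borel_measurable (borel \<Otimes>\<^sub>M borel)"
proof (rule borel_measurableI)
  obtain D1 :: "'g set" where D1: "countable D1" "\<And>x r. r > 0 \<Longrightarrow> \<exists>p\<in>D1. dist p x < r"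
    using sc_dense[OF assms(1)] by blast
  obtain D2 :: "'x set" where D2: "countable D2" "\<And>x r. r > 0 \<Longrightarrow> \<exists>p\<in>D2. dist p x < r"
    using sc_dense[OF assms(2)] by blast
  fix S :: "'x set" assume "open S"
  then have "open ((\<lambda>(g, x). act g x) -` S)"
    using c continuous_on_open_vimage[of UNIV] by auto
  then show "(\<lambda>(g, x). act g x) -` S \<inter> space (borel \<Otimes>\<^sub>M borel) \<in> sets (borel \<Otimes>\<^sub>M borel)"
    using open_in_pair_sets[OF D1 D2] by (simp add: space_pair_measure)
qed

lemma gprod_upd: "k \<le> n \<Longrightarrow> gprod mul e (w(n := y)) k = gprod mul e w k"
  by (induction k) auto

lemma walk_meas:
  fixes act :: "'g::metric_space \<Rightarrow> 'x::metric_space \<Rightarrow> 'x"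
  assumes am: "(\<lambda>(g, x). act g x) \<in> borel_measurable (borel \<Otimes>\<^sub>M borel)"
    and A: "continuous_action mul e act" and mu: "sets \<mu> = sets borel"
  shows "{..<n} \<subseteq> I \<Longrightarrow> (\<lambda>w. act (gprod mul e w n) x) \<in> borel_measurable (PiM I (\<lambda>_. \<mu>))"
proof (induction n)
  case 0
  then show ?case by simp
next
  case (Suc n)
  have eq: "act (gprod mul e w (Suc n)) x = act (w n) (act (gprod mul e w n) x)" for w
    using A unfolding continuous_action_def by simp
  have c: "(\<lambda>w. w n) \<in> borel_measurable (PiM I (\<lambda>_. \<mu>))"
  proof -
    have "n \<in> I" using Suc.prems by auto
    then have "(\<lambda>w. w n) \<in> measurable (PiM I (\<lambda>_. \<mu>)) \<mu>"
      by (rule measurable_component_singleton)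
    then show ?thesis using measurable_cong_sets[OF refl mu] by auto
  qed
  have ih: "(\<lambda>w. act (gprod mul e w n) x) \<in> borel_measurable (PiM I (\<lambda>_. \<mu>))"
  proof -
    have "{..<n} \<subseteq> I" using Suc.prems by auto
    then show ?thesis by (rule Suc.IH)
  qed
  have "(\<lambda>w. (\<lambda>(g, x). act g x) (w n, act (gprod mul e w n) x)) \<in> borel_measurable (PiM I (\<lambda>_. \<mu>))"
    by (rule measurable_compose[OF measurable_Pair[OF c ih] am])
  then show ?case unfolding eq by simp
qed

lemma walk_expect:
  fixes act :: "'g::metric_space \<Rightarrow> 'x::metric_space \<Rightarrow> 'x"
  assumes am: "(\<lambda>(g, x). act g x) \<in> borel_measurable (borel \<Otimes>\<^sub>M borel)"
    and A: "continuous_action mul e act" and mu: "prob_space \<mu>" "sets \<mu> = sets borel"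
    and Vm: "V \<in> borel_measurable borel" and V0: "\<And>x. 0 \<le> V x"
    and ly: "\<And>x. (\<integral>\<^sup>+ g. ennreal (V (act g x)) \<partial>\<mu>) \<le> ennreal (a * V x + \<beta>)"
    and a: "0 \<le> a" "a < 1" and b: "0 \<le> \<beta>"
  shows "(\<integral>\<^sup>+ w. ennreal (V (act (gprod mul e w n) x)) \<partial>PiM {..<n} (\<lambda>_. \<mu>))
           \<le> ennreal (a^n * V x + \<beta> / (1 - a))"
proof (induction n)
  case 0
  interpret P: prob_space "PiM ({}::nat set) (\<lambda>_. \<mu>)" by (rule prob_space_PiM) (use mu in auto)
  have "act e x = x" using A unfolding continuous_action_def by simp
  then have "(\<integral>\<^sup>+ w. ennreal (V (act (gprod mul e w 0) x)) \<partial>PiM {..<0} (\<lambda>_. \<mu>)) = ennreal (V x)"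
    by (simp add: nn_integral_const P.emeasure_space_1)
  also have "\<dots> \<le> ennreal (a^0 * V x + \<beta> / (1 - a))"
    using a b by (intro ennreal_leI) auto
  finally show ?case .
next
  case (Suc n)
  define C where "C = \<beta> / (1 - a)"
  have C0: "0 \<le> C" using a b unfolding C_def by auto
  interpret PS: product_sigma_finite "\<lambda>_::nat. \<mu>"
    using prob_space_imp_sigma_finite[OF mu(1)] by (simp add: product_sigma_finite_def)
  interpret P: prob_space "PiM {..<n} (\<lambda>_. \<mu>)" by (rule prob_space_PiM) (use mu in auto)
  define Y where "Y = (\<lambda>w. act (gprod mul e w n) x)"
  have [measurable]: "V \<in> borel_measurable borel" by (rule Vm)
  have Ym[measurable]: "Y \<in> borel_measurable (PiM {..<n} (\<lambda>_. \<mu>))"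
    unfolding Y_def by (rule walk_meas[OF am A mu(2)]) auto
  have fm: "(\<lambda>w. ennreal (V (act (gprod mul e w (Suc n)) x))) \<in> borel_measurable (PiM (insert n {..<n}) (\<lambda>_. \<mu>))"
  proof -
    have "(\<lambda>w. act (gprod mul e w (Suc n)) x) \<in> borel_measurable (PiM (insert n {..<n}) (\<lambda>_. \<mu>))"
      by (rule walk_meas[OF am A mu(2)]) auto
    then show ?thesis by measurable
  qed
  have upd: "act (gprod mul e (w(n := y)) (Suc n)) x = act y (Y w)" for w y
    using A gprod_upd[of n n mul e w y] unfolding continuous_action_def Y_def by simp
  have "(\<integral>\<^sup>+ w. ennreal (V (act (gprod mul e w (Suc n)) x)) \<partial>PiM {..<Suc n} (\<lambda>_. \<mu>))
      = (\<integral>\<^sup>+ w. ennreal (V (act (gprod mul e w (Suc n)) x)) \<partial>PiM (insert n {..<n}) (\<lambda>_. \<mu>))"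
    by (simp only: lessThan_Suc)
  also have "\<dots> = (\<integral>\<^sup>+ w. (\<integral>\<^sup>+ y. ennreal (V (act (gprod mul e (w(n := y)) (Suc n)) x)) \<partial>\<mu>) \<partial>PiM {..<n} (\<lambda>_. \<mu>))"
    by (rule PS.product_nn_integral_insert[OF _ _ fm]) auto
  also have "\<dots> = (\<integral>\<^sup>+ w. (\<integral>\<^sup>+ y. ennreal (V (act y (Y w))) \<partial>\<mu>) \<partial>PiM {..<n} (\<lambda>_. \<mu>))"
    by (simp only: upd)
  also have "\<dots> \<le> (\<integral>\<^sup>+ w. ennreal a * ennreal (V (Y w)) + ennreal \<beta> \<partial>PiM {..<n} (\<lambda>_. \<mu>))"
  proof (rule nn_integral_mono)
    fix w
    have "(\<integral>\<^sup>+ y. ennreal (V (act y (Y w))) \<partial>\<mu>) \<le> ennreal (a * V (Y w) + \<beta>)" by (rule ly)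
    also have "\<dots> = ennreal a * ennreal (V (Y w)) + ennreal \<beta>"
      using a b V0 ennreal_plus[of "a * V (Y w)" \<beta>] ennreal_mult[of a "V (Y w)"] by simp
    finally show "(\<integral>\<^sup>+ y. ennreal (V (act y (Y w))) \<partial>\<mu>) \<le> ennreal a * ennreal (V (Y w)) + ennreal \<beta>" .
  qed
  also have "\<dots> = ennreal a * (\<integral>\<^sup>+ w. ennreal (V (Y w)) \<partial>PiM {..<n} (\<lambda>_. \<mu>)) + ennreal \<beta>"
    by (simp add: nn_integral_add nn_integral_cmult nn_integral_const P.emeasure_space_1)
  also have "\<dots> \<le> ennreal a * ennreal (a^n * V x + C) + ennreal \<beta>"
    using Suc.IH unfolding Y_def C_def by (intro add_mono mult_left_mono) auto
  also have "\<dots> = ennreal (a^Suc n * V x + (a * C + \<beta>))"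
  proof -
    have "ennreal a * ennreal (a^n * V x + C) = ennreal (a * (a^n * V x + C))"
      using a C0 V0[of x] by (simp add: ennreal_mult)
    also have "\<dots> + ennreal \<beta> = ennreal (a * (a^n * V x + C) + \<beta>)"
      using a C0 V0[of x] b by (intro ennreal_plus[symmetric]) auto
    also have "a * (a^n * V x + C) + \<beta> = a^Suc n * V x + (a * C + \<beta>)"
      by (simp add: algebra_simps)
    finally show ?thesis .
  qed
  also have "a * C + \<beta> = C" using a unfolding C_def by (simp add: field_simps)
  finally show ?case unfolding C_def .
qed

lemma walk_prob:
  fixes act :: "'g::metric_space \<Rightarrow> 'x::metric_space \<Rightarrow> 'x"
  assumes am: "(\<lambda>(g, x). act g x) \<in> borel_measurable (borel \<Otimes>\<^sub>M borel)"
    and A: "continuous_action mul e act" and mu: "prob_space \<mu>" "sets \<mu> = sets borel"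
    and Vm: "V \<in> borel_measurable borel" and V0: "\<And>x. 0 \<le> V x"
    and ly: "\<And>x. (\<integral>\<^sup>+ g. ennreal (V (act g x)) \<partial>\<mu>) \<le> ennreal (a * V x + \<beta>)"
    and a: "0 \<le> a" "a < 1" and b: "0 \<le> \<beta>" and R: "0 < R"
  shows "1 - measure (walk_distr mul e act \<mu> n x) (V -` {0..R}) \<le> (a^n * V x + \<beta> / (1 - a)) / R"
proof -
  define P where "P = PiM {..<n} (\<lambda>_. \<mu>)"
  interpret P: prob_space P unfolding P_def by (rule prob_space_PiM) (use mu in auto)
  define Y where "Y = (\<lambda>w. act (gprod mul e w n) x)"
  define E where "E = a^n * V x + \<beta> / (1 - a)"
  have E0: "0 \<le> E" using a b V0[of x] unfolding E_def by auto
  have [measurable]: "V \<in> borel_measurable borel" by (rule Vm)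
  have Ym[measurable]: "Y \<in> borel_measurable P"
    unfolding Y_def P_def by (rule walk_meas[OF am A mu(2)]) auto
  have S: "V -` {0..R} \<in> sets borel" using measurable_sets[OF Vm, of "{0..R}"] by simp
  define B where "B = {w \<in> space P. R < V (Y w)}"
  have Bs: "B \<in> P.events" unfolding B_def by measurable
  have "measure (walk_distr mul e act \<mu> n x) (V -` {0..R}) = P.prob (Y -` (V -` {0..R}) \<inter> space P)"
    unfolding walk_distr_def P_def[symmetric] Y_def[symmetric] by (rule measure_distr[OF Ym S])
  also have "Y -` (V -` {0..R}) \<inter> space P = space P - B"
    unfolding B_def using V0 by auto
  also have "P.prob (space P - B) = 1 - P.prob B" by (rule P.prob_compl[OF Bs])
  finally have eq: "measure (walk_distr mul e act \<mu> n x) (V -` {0..R}) = 1 - P.prob B" .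
  have "ennreal R * emeasure P B = (\<integral>\<^sup>+ w. ennreal R * indicator B w \<partial>P)"
    by (rule nn_integral_cmult_indicator[OF Bs, symmetric])
  also have "\<dots> \<le> (\<integral>\<^sup>+ w. ennreal (V (Y w)) \<partial>P)"
    by (rule nn_integral_mono) (auto simp: B_def indicator_def intro: ennreal_leI)
  also have "\<dots> \<le> ennreal E"
    unfolding P_def Y_def E_def by (rule walk_expect[OF am A mu Vm V0 ly a b])
  finally have "ennreal R * ennreal (P.prob B) \<le> ennreal E"
    by (simp add: P.emeasure_eq_measure)
  then have "R * P.prob B \<le> E"
    using R E0 by (simp add: ennreal_mult[symmetric] ennreal_le_iff)
  then have "P.prob B \<le> E / R" using R by (simp add: field_simps mult.commute)
  then show ?thesis unfolding eq E_def by simp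
qed

lemma sum_if_bound:
  fixes D :: real assumes "0 \<le> D"
  shows "(\<Sum>k<n. if k < m then 1 else D) \<le> real (min n m) + real n * D"
proof (induction n)
  case 0 then show ?case by simp
next
  case (Suc n)
  show ?case
  proof (cases "n < m")
    case True
    then have "min (Suc n) m = Suc (min n m)" by simp
    then show ?thesis using Suc assms True by (simp add: algebra_simps)
  next
    case False
    then have "min (Suc n) m = min n m" by simp
    then show ?thesis using Suc assms False by (simp add: algebra_simps)
  qed
qed

lemma avg_bound:
  fixes P :: "nat \<Rightarrow> real" and D :: real
  assumes h: "\<And>k. k < n \<Longrightarrow> 1 - P k \<le> (if k < m then 1 else D)" and D: "0 \<le> D" and n: "0 < n"
  shows "1 - real m / real n - D \<le> (1 / real n) * (\<Sum>k<n. P k)"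
proof -
  have "(\<Sum>k<n. 1 - P k) \<le> (\<Sum>k<n. if k < m then 1 else D)"
    by (rule sum_mono) (use h in auto)
  also have "\<dots> \<le> real (min n m) + real n * D" by (rule sum_if_bound[OF D])
  also have "\<dots> \<le> real m + real n * D" by simp
  finally have "real n - (\<Sum>k<n. P k) \<le> real m + real n * D"
    by (simp add: sum_subtractf)
  then have "(real n - (\<Sum>k<n. P k)) / real n \<le> (real m + real n * D) / real n"
    using n by (intro divide_right_mono) auto
  then show ?thesis using n by (simp add: field_simps)
qed

theorem proposition4p12:
  fixes mul :: "'g::metric_space \<Rightarrow> 'g \<Rightarrow> 'g" and e :: 'g and ginv :: "'g \<Rightarrow> 'g"
    and act :: "'g \<Rightarrow> 'x::metric_space \<Rightarrow> 'x" and mX :: "'x measure"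
    and \<mu> :: "'g measure" and V :: "'x \<Rightarrow> real" and \<alpha> \<beta> :: real
    and \<phi> :: "nat \<Rightarrow> real" and K :: "nat \<Rightarrow> 'x set"
  assumes G: "lcsc_group mul e ginv"
    and X: "lcsc_space TYPE('x)"
    and A: "continuous_action mul e act"
    and erg: "ergodic_invariant_prob act mX"
    and mu: "prob_space \<mu>" "sets \<mu> = sets borel"
    and phi: "\<And>n. 1 \<le> \<phi> n"
    and lyap: "lyapunov act \<mu> V \<alpha> \<beta>"
    and K_def: "\<And>n. K n = V -` {0..\<phi> n}"
  shows "(lyap_exp \<phi> < (if \<alpha> \<le> 0 then \<infinity> else ereal (ln (1 / \<alpha>))) \<longrightarrow>
           unif_recurrent mul e act \<mu> K \<and>
           (\<exists>n0. \<forall>\<epsilon>>0. \<exists>M. compact M \<and>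
              (\<forall>n\<ge>n0. \<forall>x\<in>K n. measure (walk_distr mul e act \<mu> n x) M \<ge> 1 - \<epsilon>)))
       \<and> (lyap_exp \<phi> = 0 \<longrightarrow> unif_recurrent_avg mul e act \<mu> K)"
proof -
  have prp: "proper_fun V" and Vc: "continuous_on UNIV V" and V0: "\<And>x. 0 \<le> V x"
    and al: "\<alpha> < 1" and b: "0 \<le> \<beta>"
    and ly0: "\<And>x. enn2ereal (\<integral>\<^sup>+ g. ennreal (V (act g x)) \<partial>\<mu>) \<le> ereal (\<alpha> * V x + \<beta>)"
    using lyap unfolding lyapunov_def by auto
  have Vm: "V \<in> borel_measurable borel" by (rule borel_measurable_continuous_onI[OF Vc])
  have am: "(\<lambda>(g, x). act g x) \<in> borel_measurable (borel \<Otimes>\<^sub>M borel)"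
    using G X A unfolding lcsc_group_def lcsc_space_def continuous_action_def
    by (intro act_meas) auto
  have cM: "compact (V -` {0..R})" for R
    using prp unfolding proper_fun_def by auto
  have key: "1 - measure (walk_distr mul e act \<mu> n x) (V -` {0..R}) \<le> (a^n * V x + \<beta> / (1 - a)) / R"
    if a: "max \<alpha> 0 \<le> a" "a < 1" and R: "0 < R" for a R n x
  proof (rule walk_prob[OF am A mu Vm V0 _ _ _ b R])
    show "0 \<le> a" "a < 1" using a by auto
    fix y
    have "(\<integral>\<^sup>+ g. ennreal (V (act g y)) \<partial>\<mu>) = e2ennreal (enn2ereal (\<integral>\<^sup>+ g. ennreal (V (act g y)) \<partial>\<mu>))"
      by simp
    also have "\<dots> \<le> e2ennreal (ereal (\<alpha> * V y + \<beta>))" by (rule e2ennreal_mono[OF ly0])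
    also have "\<dots> = ennreal (\<alpha> * V y + \<beta>)" by simp
    also have "\<dots> \<le> ennreal (a * V y + \<beta>)"
      using a V0[of y] by (intro ennreal_leI add_right_mono mult_right_mono) auto
    finally show "(\<integral>\<^sup>+ g. ennreal (V (act g y)) \<partial>\<mu>) \<le> ennreal (a * V y + \<beta>)" .
  qed
  have partI: "\<exists>n0. \<forall>\<epsilon>>0. \<exists>M. compact M \<and>
              (\<forall>n\<ge>n0. \<forall>x\<in>K n. measure (walk_distr mul e act \<mu> n x) M \<ge> 1 - \<epsilon>)"
    if hyp: "lyap_exp \<phi> < (if \<alpha> \<le> 0 then \<infinity> else ereal (ln (1 / \<alpha>)))"
  proof -
    define a where "a = max \<alpha> 0"
    have a: "max \<alpha> 0 \<le> a" "a < 1" "0 \<le> a" using al unfolding a_def by auto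
    define C where "C = \<beta> / (1 - a)"
    have C0: "0 \<le> C" using a b unfolding C_def by auto
    obtain n0 where n0: "\<And>n. n \<ge> n0 \<Longrightarrow> a^n * \<phi> n \<le> 1"
    proof (cases "\<alpha> \<le> 0")
      case True
      then have "a = 0" unfolding a_def by auto
      then show ?thesis by (intro that[of 1]) (auto simp: power_0_left)
    next
      case False
      then have a\<alpha>: "a = \<alpha>" "0 < \<alpha>" unfolding a_def by auto
      have "Limsup sequentially (\<lambda>n. ereal (ln (\<phi> n) / real n)) < ereal (ln (1 / \<alpha>))"
        using hyp False unfolding lyap_exp_def by simp
      then have "eventually (\<lambda>n. ereal (ln (\<phi> n) / real n) < ereal (ln (1 / \<alpha>))) sequentially"
        by (rule Limsup_lessD)
      then obtain N where N: "\<And>n. n \<ge> N \<Longrightarrow> ln (\<phi> n) / real n < ln (1 / \<alpha>)"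
        unfolding eventually_sequentially by auto
      show ?thesis
      proof (rule that[of "max N 1"])
        fix n assume "max N 1 \<le> n"
        then have n: "n \<ge> N" "n \<ge> 1" by auto
        have "ln (\<phi> n) < real n * ln (1 / \<alpha>)" using N[OF n(1)] n(2) by (simp add: field_simps)
        also have "\<dots> = ln ((1 / \<alpha>) ^ n)" using a\<alpha> by (simp add: ln_realpow)
        finally have "\<phi> n < (1 / \<alpha>) ^ n" using phi[of n] a\<alpha> by (simp add: ln_less_cancel_iff)
        then have "\<alpha>^n * \<phi> n < \<alpha>^n * (1 / \<alpha>) ^ n" using a\<alpha> by (intro mult_strict_left_mono) auto
        also have "\<dots> = 1" using a\<alpha> by (simp add: power_one_over[symmetric] power_mult_distrib[symmetric])
        finally show "a^n * \<phi> n \<le> 1" using a\<alpha> by simp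
      qed
    qed
    show ?thesis
    proof (intro exI[of _ n0] allI impI)
      fix \<epsilon> :: real assume \<epsilon>: "\<epsilon> > 0"
      define R where "R = (1 + C) / \<epsilon>"
      have R: "0 < R" using C0 \<epsilon> unfolding R_def by auto
      show "\<exists>M. compact M \<and> (\<forall>n\<ge>n0. \<forall>x\<in>K n. measure (walk_distr mul e act \<mu> n x) M \<ge> 1 - \<epsilon>)"
      proof (intro exI[of _ "V -` {0..R}"] conjI cM allI impI ballI)
        fix n x assume n: "n0 \<le> n" and x: "x \<in> K n"
        have "a^n * V x \<le> a^n * \<phi> n" using x K_def[of n] a by (intro mult_left_mono) auto
        also have "\<dots> \<le> 1" by (rule n0[OF n])
        finally have "(a^n * V x + C) / R \<le> (1 + C) / R" using R by (intro divide_right_mono) auto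
        also have "\<dots> = \<epsilon>" unfolding R_def using C0 \<epsilon> by simp
        finally show "1 - \<epsilon> \<le> measure (walk_distr mul e act \<mu> n x) (V -` {0..R})"
          using key[OF a(1,2) R, of n x] unfolding C_def by simp
      qed
    qed
  qed
  have partII: "unif_recurrent_avg mul e act \<mu> K" if hyp: "lyap_exp \<phi> = 0"
    unfolding unif_recurrent_avg_def
  proof (intro allI impI)
    fix \<epsilon> :: real assume \<epsilon>: "\<epsilon> > 0"
    define a where "a = max \<alpha> (1/2)"
    have a: "max \<alpha> 0 \<le> a" "a < 1" "0 < a" "1/2 \<le> a" using al unfolding a_def by auto
    define L where "L = ln (1 / a)"
    have L: "0 < L" using a unfolding L_def by simp
    have lna: "ln a = - L" using a unfolding L_def by (simp add: ln_div)
    define C where "C = \<beta> / (1 - a)"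
    have C0: "0 \<le> C" using a b unfolding C_def by auto
    define \<delta> where "\<delta> = \<epsilon> * L / 3"
    have \<delta>: "0 < \<delta>" using \<epsilon> L unfolding \<delta>_def by auto
    have "Limsup sequentially (\<lambda>n. ereal (ln (\<phi> n) / real n)) < ereal \<delta>"
      using hyp \<delta> unfolding lyap_exp_def by simp
    then have "eventually (\<lambda>n. ereal (ln (\<phi> n) / real n) < ereal \<delta>) sequentially"
      by (rule Limsup_lessD)
    then obtain N where N: "\<And>n. n \<ge> N \<Longrightarrow> ln (\<phi> n) / real n < \<delta>"
      unfolding eventually_sequentially by auto
    define R where "R = 3 * (1 + C) / \<epsilon>"
    have R: "0 < R" using C0 \<epsilon> unfolding R_def by auto
    define D where "D = (1 + C) / R"
    have D: "D = \<epsilon> / 3" "0 \<le> D" using C0 \<epsilon> unfolding D_def R_def by (auto simp: field_simps)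
    show "\<exists>n0 M. compact M \<and> (\<forall>n\<ge>n0. \<forall>x\<in>K n.
           1 - \<epsilon> \<le> 1 / real n * (\<Sum>k<n. measure (walk_distr mul e act \<mu> k x) M))"
    proof (intro exI[of _ "max N (nat \<lceil>3 / \<epsilon>\<rceil> + 1)"] exI[of _ "V -` {0..R}"] conjI cM allI impI ballI)
      fix n x assume n: "max N (nat \<lceil>3 / \<epsilon>\<rceil> + 1) \<le> n" and x: "x \<in> K n"
      have nN: "n \<ge> N" and n0: "0 < n" using n by auto
      have "3 / \<epsilon> < real n" using n by linarith
      then have inv_n: "1 / real n < \<epsilon> / 3" using \<epsilon> n0 by (simp add: field_simps)
      have Vx: "V x \<le> \<phi> n" using x K_def[of n] by auto
      have lp: "0 \<le> ln (\<phi> n)" using phi[of n] by simp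
      have ph0: "0 < \<phi> n" using phi[of n] by simp
      define m where "m = nat \<lceil>ln (\<phi> n) / L\<rceil>"
      have hm1: "ln (\<phi> n) / L \<le> real m" unfolding m_def by linarith
      have q: "0 \<le> ln (\<phi> n) / L" using lp L by simp
      then have "real m = of_int \<lceil>ln (\<phi> n) / L\<rceil>" unfolding m_def by simp
      then have hm2: "real m \<le> ln (\<phi> n) / L + 1" by (simp add: of_int_ceiling_le_add_one)
      have "ln (a^m * \<phi> n) = real m * ln a + ln (\<phi> n)"
        using a ph0 by (simp add: ln_mult ln_realpow)
      also have "\<dots> \<le> 0" using hm1 L unfolding lna by (simp add: field_simps)
      finally have ham: "a^m * \<phi> n \<le> 1" using a ph0 by simp
      let ?P = "\<lambda>k. measure (walk_distr mul e act \<mu> k x) (V -` {0..R})"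
      have h: "1 - ?P k \<le> (if k < m then 1 else D)" if "k < n" for k
      proof (cases "k < m")
        case True then show ?thesis by simp
      next
        case False
        have "a^k * V x \<le> a^m * \<phi> n"
          using False a Vx V0[of x] by (intro mult_mono power_decreasing) auto
        then have "a^k * V x \<le> 1" using ham by simp
        then have "(a^k * V x + C) / R \<le> (1 + C) / R" using R by (intro divide_right_mono) auto
        then show ?thesis using key[OF a(1,2) R, of k x] False unfolding C_def D_def by simp
      qed
      have avg: "1 - real m / real n - D \<le> (1 / real n) * (\<Sum>k<n. ?P k)"
        by (rule avg_bound[OF h D(2) n0])
      have "real m / real n \<le> (ln (\<phi> n) / L + 1) / real n"
        using hm2 n0 by (intro divide_right_mono) auto
      also have "\<dots> = (ln (\<phi> n) / real n) / L + 1 / real n" using L n0 by (simp add: field_simps)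
      also have "\<dots> < \<delta> / L + \<epsilon> / 3"
        using N[OF nN] L inv_n by (intro add_less_le_mono divide_strict_right_mono) auto
      also have "\<delta> / L = \<epsilon> / 3" unfolding \<delta>_def using L by simp
      finally have "real m / real n < 2 * \<epsilon> / 3" by simp
      then show "1 - \<epsilon> \<le> 1 / real n * (\<Sum>k<n. ?P k)" using avg D(1) by linarith
    qed
  qed
  show ?thesis
  proof (intro conjI impI)
    assume h: "lyap_exp \<phi> < (if \<alpha> \<le> 0 then \<infinity> else ereal (ln (1 / \<alpha>)))"
    show "\<exists>n0. \<forall>\<epsilon>>0. \<exists>M. compact M \<and>
              (\<forall>n\<ge>n0. \<forall>x\<in>K n. measure (walk_distr mul e act \<mu> n x) M \<ge> 1 - \<epsilon>)"
      by (rule partI[OF h])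
    then show "unif_recurrent mul e act \<mu> K" unfolding unif_recurrent_def by blast
  next
    assume "lyap_exp \<phi> = 0" then show "unif_recurrent_avg mul e act \<mu> K" by (rule partII)
  qed
qed

end
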